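(* If $n \ge 3$ is odd, then $\mathrm{sg_e}(K_{n,n}) \ge n+2$ and $\mathrm{sg_e}(K_{n,n-1}) \ge n+1$.
   Context: All graphs are finite, simple and connected. A set $S \subseteq V(G)$ is a strong edge geodetic set of $G$ if one can assign to every unordered pair $\{u,v\}$ of distinct vertices of $S$ either one shortest $u,v$-path $P_{uv}$ in $G$ or no path, in such a way that every edge of $G$ lies on at least one of the assigned paths. The strong edge geodetic number $\mathrm{sg_e}(G)$ is the minimum cardinality of a strong edge geodetic set of $G$. $K_{n,m}$ denotes the complete bipartite graph with parts of sizes $n$ and $m$. *)

theory Defs
  imports Main
begin

type_synonym 'a graph = "'a set \<times> 'a set set"

definition verts :: "'a graph \<Rightarrow> 'a set" where "verts G = fst G"
definition edges :: "'a graph \<Rightarrow> 'a set set" where "edges G = snd G"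

definition is_path :: "'a graph \<Rightarrow> 'a list \<Rightarrow> bool" where
  "is_path G p \<longleftrightarrow> p \<noteq> [] \<and> set p \<subseteq> verts G \<and> distinct p \<and>
     (\<forall>i. Suc i < length p \<longrightarrow> {p ! i, p ! Suc i} \<in> edges G)"

definition path_edges :: "'a list \<Rightarrow> 'a set set" where
  "path_edges p = {{p ! i, p ! Suc i} | i. Suc i < length p}"

definition is_shortest_path :: "'a graph \<Rightarrow> 'a \<Rightarrow> 'a \<Rightarrow> 'a list \<Rightarrow> bool" where
  "is_shortest_path G u v p \<longleftrightarrow> is_path G p \<and> hd p = u \<and> last p = v \<and>
     (\<forall>q. is_path G q \<and> hd q = u \<and> last q = v \<longrightarrow> length p \<le> length q)"

text \<open>Strong edge geodetic set: each unordered pair of distinct vertices of S gets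
  either one shortest path between them (Some p) or no path (None), and every edge lies
  on some assigned path.\<close>
definition strong_edge_geodetic :: "'a graph \<Rightarrow> 'a set \<Rightarrow> bool" where
  "strong_edge_geodetic G S \<longleftrightarrow> S \<subseteq> verts G \<and>
     (\<exists>A :: 'a set \<Rightarrow> 'a list option.
        (\<forall>u\<in>S. \<forall>v\<in>S. u \<noteq> v \<longrightarrow>
           (case A {u, v} of None \<Rightarrow> True
            | Some p \<Rightarrow> is_shortest_path G u v p \<or> is_shortest_path G v u p)) \<and>
        (\<forall>e\<in>edges G. \<exists>u\<in>S. \<exists>v\<in>S. u \<noteq> v \<and>
           (\<exists>p. A {u, v} = Some p \<and> e \<in> path_edges p)))"

definition sg_e :: "'a graph \<Rightarrow> nat" where
  "sg_e G = (LEAST k. \<exists>S. strong_edge_geodetic G S \<and> card S = k)"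

definition K_bip :: "nat \<Rightarrow> nat \<Rightarrow> (nat + nat) graph" where
  "K_bip n m = (Inl ` {..<n} \<union> Inr ` {..<m},
                {{Inl i, Inr j} | i j. i < n \<and> j < m})"

end

theory Submission
  imports Defs
begin

definition bip :: "'a set \<Rightarrow> 'a set \<Rightarrow> 'a graph" where
  "bip P Q = (P \<union> Q, {{x,y} | x y. x \<in> P \<and> y \<in> Q})"

lemma verts_bip[simp]: "verts (bip P Q) = P \<union> Q"
  by (simp add: bip_def verts_def)
lemma edges_bip[simp]: "edges (bip P Q) = {{x,y} | x y. x \<in> P \<and> y \<in> Q}"
  by (simp add: bip_def edges_def)

lemma bip_swap: "bip P Q = bip Q P"
  unfolding bip_def by (auto simp: insert_commute)

lemma K_bip_eq: "K_bip n m = bip (Inl ` {..<n}) (Inr ` {..<m})"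
  unfolding K_bip_def bip_def by auto

lemma is_path_2: "is_path G [a,b] \<longleftrightarrow> a \<noteq> b \<and> a \<in> verts G \<and> b \<in> verts G \<and> {a,b} \<in> edges G"
  unfolding is_path_def by (auto simp: less_Suc_eq)

lemma is_path_3: "is_path G [a,b,c] \<longleftrightarrow> a \<noteq> b \<and> a \<noteq> c \<and> b \<noteq> c \<and> a \<in> verts G \<and> b \<in> verts G
   \<and> c \<in> verts G \<and> {a,b} \<in> edges G \<and> {b,c} \<in> edges G"
  unfolding is_path_def by (auto simp: less_Suc_eq)

lemma path_edges_2: "path_edges [a,b] = {{a,b}}"
  unfolding path_edges_def by (auto simp: less_Suc_eq)

lemma path_edges_finite: "finite (path_edges p)"
proof -
  have "path_edges p \<subseteq> (\<lambda>i. {p ! i, p ! Suc i}) ` {..<length p}"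
    unfolding path_edges_def by auto
  then show ?thesis by (rule finite_subset) auto
qed

lemma shortest_2: "is_path G [a,b] \<Longrightarrow> is_shortest_path G a b [a,b]"
  unfolding is_shortest_path_def
proof (intro conjI allI impI)
  fix q assume ab: "is_path G [a,b]" and q: "is_path G q \<and> hd q = a \<and> last q = b"
  have "a \<noteq> b" using ab is_path_2 by metis
  have "q \<noteq> []" using q unfolding is_path_def by auto
  show "length [a,b] \<le> length q"
  proof (rule ccontr)
    assume "\<not> ?thesis"
    then have "length q = 1" using \<open>q \<noteq> []\<close> by (cases q) (auto simp: Suc_le_eq)
    then obtain z where "q = [z]" by (cases q) auto
    then show False using q \<open>a \<noteq> b\<close> by auto
  qed
qed auto

lemma edge_endpoint:
  assumes "length p \<le> 3" "e \<in> path_edges p"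
  shows "hd p \<in> e \<or> last p \<in> e"
proof -
  obtain i where i: "Suc i < length p" "e = {p ! i, p ! Suc i}"
    using assms(2) unfolding path_edges_def by auto
  have ne: "p \<noteq> []" using i by auto
  show ?thesis
  proof (cases i)
    case 0
    then show ?thesis using i ne by (simp add: hd_conv_nth)
  next
    case (Suc j)
    then have "j = 0" "length p = 3" using i assms(1) by auto
    then show ?thesis using i ne Suc by (simp add: last_conv_nth numeral_2_eq_2)
  qed
qed

lemma path_short:
  assumes disj: "P \<inter> Q = {}" and ne: "P \<noteq> {}" "Q \<noteq> {}"
    and sp: "is_shortest_path (bip P Q) u v p" and uv: "u \<noteq> v" "u \<in> P \<union> Q" "v \<in> P \<union> Q"
  shows "length p \<le> 3"
proof -
  have ex: "\<exists>q. is_path (bip P Q) q \<and> hd q = u \<and> last q = v \<and> length q \<le> 3"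
  proof -
    obtain w1 where w1: "w1 \<in> P" using ne by auto
    obtain w2 where w2: "w2 \<in> Q" using ne by auto
    consider "u \<in> P" "v \<in> Q" | "u \<in> Q" "v \<in> P" | "u \<in> P" "v \<in> P" | "u \<in> Q" "v \<in> Q"
      using uv by blast
    then show ?thesis
    proof cases
      case 1
      then show ?thesis using uv
        by (intro exI[of _ "[u,v]"]) (auto simp: is_path_2)
    next
      case 2
      then show ?thesis using uv
        by (intro exI[of _ "[u,v]"]) (auto simp: is_path_2 insert_commute)
    next
      case 3
      then show ?thesis using uv w2 disj
        by (intro exI[of _ "[u,w2,v]"]) (auto simp: is_path_3 insert_commute)
    next
      case 4
      then show ?thesis using uv w1 disj
        by (intro exI[of _ "[u,w1,v]"]) (auto simp: is_path_3 insert_commute)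
    qed
  qed
  then obtain q where "is_path (bip P Q) q \<and> hd q = u \<and> last q = v" "length q \<le> 3" by blast
  then show ?thesis using sp unfolding is_shortest_path_def by force
qed

lemma sp_facts:
  assumes "is_shortest_path G u v p \<or> is_shortest_path G v u p"
  shows "is_path G p" "{hd p, last p} = {u, v}"
  using assms unfolding is_shortest_path_def by auto

lemma sp_short:
  assumes disj: "P \<inter> Q = {}" and ne: "P \<noteq> {}" "Q \<noteq> {}"
    and sp: "is_shortest_path (bip P Q) u v p \<or> is_shortest_path (bip P Q) v u p"
    and uv: "u \<noteq> v" "u \<in> P \<union> Q" "v \<in> P \<union> Q"
  shows "length p \<le> 3"
  using sp path_short[OF disj ne _ uv] path_short[OF disj ne, of v u p] uv by auto

lemma one_side_full:
  assumes disj: "P \<inter> Q = {}" and ne: "P \<noteq> {}" "Q \<noteq> {}"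
    and sge: "strong_edge_geodetic (bip P Q) S"
  shows "P \<subseteq> S \<or> Q \<subseteq> S"
proof (rule ccontr)
  assume "\<not> ?thesis"
  then obtain x y where xy: "x \<in> P" "x \<notin> S" "y \<in> Q" "y \<notin> S" by blast
  obtain A where A1: "\<forall>u\<in>S. \<forall>v\<in>S. u \<noteq> v \<longrightarrow>
           (case A {u, v} of None \<Rightarrow> True
            | Some p \<Rightarrow> is_shortest_path (bip P Q) u v p \<or> is_shortest_path (bip P Q) v u p)"
    and A2: "\<forall>e\<in>edges (bip P Q). \<exists>u\<in>S. \<exists>v\<in>S. u \<noteq> v \<and>
           (\<exists>p. A {u, v} = Some p \<and> e \<in> path_edges p)"
    and SV: "S \<subseteq> P \<union> Q"
    using sge unfolding strong_edge_geodetic_def by auto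
  have "{x,y} \<in> edges (bip P Q)" using xy by auto
  then obtain u v p where uv: "u \<in> S" "v \<in> S" "u \<noteq> v" "A {u,v} = Some p" "{x,y} \<in> path_edges p"
    using A2 by blast
  have sp: "is_shortest_path (bip P Q) u v p \<or> is_shortest_path (bip P Q) v u p"
    using A1 uv by force
  have "length p \<le> 3" using sp_short[OF disj ne sp] uv SV by auto
  then have "hd p \<in> {x,y} \<or> last p \<in> {x,y}" using edge_endpoint uv by blast
  moreover have "hd p \<in> S" "last p \<in> S" using sp_facts(2)[OF sp] uv by auto
  ultimately show False using xy by auto
qed

lemma full_side:
  assumes fin: "finite P" "finite Q" and disj: "P \<inter> Q = {}" and ne: "P \<noteq> {}" "Q \<noteq> {}"
    and sge: "strong_edge_geodetic (bip P Q) S" and PS: "P \<subseteq> S"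
  shows "card (Q - S) * ((card P + 1) div 2) \<le> card P * (card P - 1) div 2"
proof -
  obtain A where A1: "\<forall>u\<in>S. \<forall>v\<in>S. u \<noteq> v \<longrightarrow>
           (case A {u, v} of None \<Rightarrow> True
            | Some p \<Rightarrow> is_shortest_path (bip P Q) u v p \<or> is_shortest_path (bip P Q) v u p)"
    and A2: "\<forall>e\<in>edges (bip P Q). \<exists>u\<in>S. \<exists>v\<in>S. u \<noteq> v \<and>
           (\<exists>p. A {u, v} = Some p \<and> e \<in> path_edges p)"
    and SV: "S \<subseteq> P \<union> Q"
    using sge unfolding strong_edge_geodetic_def by auto
  define F where "F y = {{a,c} | a c. a \<in> P \<and> c \<in> P \<and> a \<noteq> c \<and>
       (\<exists>p. A {a,c} = Some p \<and> length p = 3 \<and> p ! 1 = y)}" for y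
  have Fsub: "F y \<subseteq> {B. B \<subseteq> P \<and> card B = 2}" for y
    unfolding F_def by auto
  have Ffin: "finite (F y)" for y
    by (rule finite_subset[OF Fsub]) (use fin in auto)
  have Fdisj: "F y \<inter> F y' = {}" if "y \<noteq> y'" for y y'
  proof (rule ccontr)
    assume "F y \<inter> F y' \<noteq> {}"
    then obtain \<pi> where "\<pi> \<in> F y" "\<pi> \<in> F y'" by blast
    note h = this
    obtain p where "A \<pi> = Some p" "p ! 1 = y" using h(1) unfolding F_def by auto
    moreover obtain p' where "A \<pi> = Some p'" "p' ! 1 = y'" using h(2) unfolding F_def by auto
    ultimately show False using that by auto
  qed
  have cov: "card P \<le> 2 * card (F y)" if y: "y \<in> Q" "y \<notin> S" for y
  proof -
    define Ey where "Ey = (\<lambda>x. {x,y}) ` P"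
    have "inj_on (\<lambda>x. {x,y}) P"
      using disj y by (auto simp: inj_on_def doubleton_eq_iff)
    then have cEy: "card Ey = card P" unfolding Ey_def by (simp add: card_image)
    have sub: "Ey \<subseteq> (\<Union>\<pi>\<in>F y. path_edges (the (A \<pi>)))"
    proof
      fix e assume "e \<in> Ey"
      then obtain x where x: "x \<in> P" "e = {x,y}" unfolding Ey_def by auto
      then have "e \<in> edges (bip P Q)" using y by auto
      then obtain u v p where uv: "u \<in> S" "v \<in> S" "u \<noteq> v" "A {u,v} = Some p" "e \<in> path_edges p"
        using A2 by blast
      have sp: "is_shortest_path (bip P Q) u v p \<or> is_shortest_path (bip P Q) v u p"
        using A1 uv by force
      have len: "length p \<le> 3" using sp_short[OF disj ne sp] uv SV by auto
      have pa: "is_path (bip P Q) p" and hl: "{hd p, last p} = {u, v}" using sp_facts[OF sp] by auto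
      have pne: "p \<noteq> []" using pa unfolding is_path_def by auto
      have h0: "p ! 0 \<in> S" using hl uv pne by (auto simp: hd_conv_nth doubleton_eq_iff)
      have hL: "p ! (length p - 1) \<in> S" using hl uv pne by (auto simp: last_conv_nth doubleton_eq_iff)
      obtain i where i: "Suc i < length p" "e = {p ! i, p ! Suc i}"
        using uv(5) unfolding path_edges_def by auto
      have L3: "length p = 3" and y1: "p ! 1 = y"
      proof -
        have "i = 0 \<or> i = 1" using i len by auto
        then have "length p = 3 \<and> p ! 1 = y"
        proof
          assume "i = 0"
          then have "y = p ! 1" using i x y h0 by (auto simp: doubleton_eq_iff)
          moreover have "length p \<noteq> 2" using hL y \<open>y = p ! 1\<close> by auto
          ultimately show ?thesis using i \<open>i = 0\<close> len by auto
        next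
          assume "i = 1"
          then have "length p = 3" using i len by auto
          then have "y = p ! 1" using i x y hL \<open>i = 1\<close> by (auto simp: doubleton_eq_iff numeral_2_eq_2)
          then show ?thesis using \<open>length p = 3\<close> by auto
        qed
        then show "length p = 3" "p ! 1 = y" by auto
      qed
      then obtain a c where pe: "p = [a, y, c]"
        by (cases p; cases "tl p"; cases "tl (tl p)") (auto simp: numeral_3_eq_3)
      have ac: "{a,c} = {u,v}" using hl pe by simp
      have p3: "a \<noteq> c" "{a,y} \<in> edges (bip P Q)" "{y,c} \<in> edges (bip P Q)"
        using pa pe by (auto simp: is_path_3)
      have "a \<in> P" using p3(2) y disj by (auto simp: doubleton_eq_iff)
      moreover have "c \<in> P" using p3(3) y disj by (auto simp: doubleton_eq_iff)
      ultimately have "{u,v} \<in> F y" unfolding F_def using ac p3(1) uv(4) pe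
        by (intro CollectI exI[of _ a] exI[of _ c]) auto
      moreover have "e \<in> path_edges (the (A {u,v}))" using uv by simp
      ultimately show "e \<in> (\<Union>\<pi>\<in>F y. path_edges (the (A \<pi>)))" by blast
    qed
    have pe2: "card (path_edges (the (A \<pi>))) \<le> 2" if pi: "\<pi> \<in> F y" for \<pi>
    proof -
      obtain p where p: "A \<pi> = Some p" "length p = 3" using pi unfolding F_def by blast
      have "path_edges p \<subseteq> {{p!0, p!1}, {p!1, p!2}}"
        unfolding path_edges_def using p(2) by (auto simp: numeral_3_eq_3 numeral_2_eq_2 less_Suc_eq)
      then have "card (path_edges p) \<le> card {{p!0, p!1}, {p!1, p!2}}" by (rule card_mono[rotated]) auto
      also have "\<dots> \<le> 2" by (simp add: card_insert_le_m1)
      finally show ?thesis using p by simp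
    qed
    have "card P \<le> card (\<Union>\<pi>\<in>F y. path_edges (the (A \<pi>)))"
      using cEy sub by (metis card_mono finite_UN_I Ffin path_edges_finite)
    also have "\<dots> \<le> (\<Sum>\<pi>\<in>F y. card (path_edges (the (A \<pi>))))" by (rule card_UN_le[OF Ffin])
    also have "\<dots> \<le> (\<Sum>\<pi>\<in>F y. 2)" by (rule sum_mono) (rule pe2)
    also have "\<dots> = 2 * card (F y)" by simp
    finally show ?thesis .
  qed
  have "card (Q - S) * ((card P + 1) div 2) \<le> (\<Sum>y\<in>Q - S. card (F y))"
    using sum_bounded_below[of "Q - S" "(card P + 1) div 2" "\<lambda>y. card (F y)"] cov by force
  also have "\<dots> = card (\<Union>y\<in>Q - S. F y)"
    by (rule card_UN_disjoint[symmetric]) (use fin Ffin Fdisj in auto)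
  also have "\<dots> \<le> card {B. B \<subseteq> P \<and> card B = 2}"
    by (rule card_mono) (use fin Fsub in auto)
  also have "\<dots> = card P * (card P - 1) div 2" by (simp add: n_subsets fin choose_two)
  finally show ?thesis .
qed

lemma exists_sge:
  assumes disj: "P \<inter> Q = {}"
  shows "strong_edge_geodetic (bip P Q) (P \<union> Q)"
proof -
  define G where "G = bip P Q"
  define A where "A e = (if e \<in> edges G then Some (SOME p. \<exists>a b. e = {a,b} \<and> p = [a,b]) else None)" for e
  have Aspec: "\<exists>a b. {u,v} = {a,b} \<and> A {u,v} = Some [a,b]" if "{u,v} \<in> edges G" for u v
  proof -
    have "\<exists>p. \<exists>a b. {u,v} = {a,b} \<and> p = [a,b]" by blast
    from someI_ex[OF this] show ?thesis using that unfolding A_def by auto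
  qed
  have edge_ne: "u \<noteq> v" "u \<in> P \<union> Q" "v \<in> P \<union> Q" if "{u,v} \<in> edges G" for u v
    using that disj unfolding G_def by (auto simp: doubleton_eq_iff)
  have "\<forall>u\<in>P \<union> Q. \<forall>v\<in>P \<union> Q. u \<noteq> v \<longrightarrow>
           (case A {u, v} of None \<Rightarrow> True
            | Some p \<Rightarrow> is_shortest_path G u v p \<or> is_shortest_path G v u p)"
  proof (intro ballI impI)
    fix u v assume "u \<in> P \<union> Q" "v \<in> P \<union> Q" "u \<noteq> v"
    show "case A {u, v} of None \<Rightarrow> True
            | Some p \<Rightarrow> is_shortest_path G u v p \<or> is_shortest_path G v u p"
    proof (cases "{u,v} \<in> edges G")
      case True
      then obtain a b where ab: "{u,v} = {a,b}" "A {u,v} = Some [a,b]" using Aspec by blast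
      have "{a,b} \<in> edges G" using ab True by simp
      then have "is_path G [a,b]" using edge_ne[of a b] unfolding G_def by (simp add: is_path_2)
      then have "is_shortest_path G a b [a,b]" by (rule shortest_2)
      then show ?thesis using ab \<open>u \<noteq> v\<close> by (auto simp: doubleton_eq_iff)
    next
      case False
      then show ?thesis unfolding A_def by simp
    qed
  qed
  moreover have "\<forall>e\<in>edges G. \<exists>u\<in>P \<union> Q. \<exists>v\<in>P \<union> Q. u \<noteq> v \<and>
           (\<exists>p. A {u, v} = Some p \<and> e \<in> path_edges p)"
  proof
    fix e assume e: "e \<in> edges G"
    then obtain x y where xy: "e = {x,y}" "x \<in> P" "y \<in> Q" unfolding G_def by auto
    then obtain a b where ab: "{x,y} = {a,b}" "A {x,y} = Some [a,b]" using Aspec e by blast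
    have "x \<noteq> y" using xy disj by auto
    then show "\<exists>u\<in>P \<union> Q. \<exists>v\<in>P \<union> Q. u \<noteq> v \<and> (\<exists>p. A {u, v} = Some p \<and> e \<in> path_edges p)"
      using xy ab by (intro bexI[of _ x] bexI[of _ y]) (auto simp: path_edges_2)
  qed
  ultimately show ?thesis unfolding strong_edge_geodetic_def G_def by auto
qed

lemma card_full:
  assumes "finite Q" "P \<inter> Q = {}" "P \<subseteq> S" "S \<subseteq> P \<union> Q" "finite P"
  shows "card S + card (Q - S) = card P + card Q"
proof -
  have S: "S = P \<union> (Q \<inter> S)" using assms by auto
  have "card S = card P + card (Q \<inter> S)"
    using assms by (subst S, subst card_Un_disjoint) auto
  moreover have "card (Q \<inter> S) + card (Q - S) = card Q"
    using assms(1) by (metis card_Int_Diff inf_commute Diff_Int2 Int_absorb)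
  ultimately show ?thesis by simp
qed

lemma sg_e_ge:
  assumes "\<And>S. strong_edge_geodetic G S \<Longrightarrow> b \<le> card S" "strong_edge_geodetic G S0"
  shows "b \<le> sg_e G"
  unfolding sg_e_def
  by (rule LeastI2_ex) (use assms in auto)

lemma K_lower:
  assumes "n \<ge> 1" "m \<ge> 1" and sge: "strong_edge_geodetic (K_bip n m) S"
  shows "(\<exists>k. card S + k = n + m \<and> k * ((n + 1) div 2) \<le> n * (n - 1) div 2) \<or>
         (\<exists>k. card S + k = n + m \<and> k * ((m + 1) div 2) \<le> m * (m - 1) div 2)"
proof -
  define X :: "(nat + nat) set" where "X = Inl ` {..<n}"
  define Y :: "(nat + nat) set" where "Y = Inr ` {..<m}"
  have cX: "card X = n" unfolding X_def by (simp add: card_image)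
  have cY: "card Y = m" unfolding Y_def by (simp add: card_image)
  have disj: "X \<inter> Y = {}" "Y \<inter> X = {}" unfolding X_def Y_def by auto
  have "Inl 0 \<in> X" "Inr 0 \<in> Y" unfolding X_def Y_def using assms by auto
  then have ne: "X \<noteq> {}" "Y \<noteq> {}" by auto
  have fin: "finite X" "finite Y" unfolding X_def Y_def by auto
  have s1: "strong_edge_geodetic (bip X Y) S" using sge K_bip_eq X_def Y_def by simp
  have s2: "strong_edge_geodetic (bip Y X) S" using s1 bip_swap by metis
  have SV: "S \<subseteq> X \<union> Y" using s1 unfolding strong_edge_geodetic_def by simp
  from one_side_full[OF disj(1) ne s1] show ?thesis
  proof
    assume XS: "X \<subseteq> S"
    have "card S + card (Y - S) = n + m" using card_full[OF fin(2) disj(1) XS SV fin(1)] cX cY by simp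
    moreover have "card (Y - S) * ((n + 1) div 2) \<le> n * (n - 1) div 2"
      using full_side[OF fin disj(1) ne s1 XS] cX by simp
    ultimately show ?thesis by blast
  next
    assume YS: "Y \<subseteq> S"
    have "card S + card (X - S) = n + m" using card_full[OF fin(1) disj(2) YS _ fin(2)] SV cX cY by (auto simp: Un_commute)
    moreover have "card (X - S) * ((m + 1) div 2) \<le> m * (m - 1) div 2"
      using full_side[OF fin(2,1) disj(2) ne(2,1) s2 YS] cY by simp
    ultimately show ?thesis by blast
  qed
qed

lemma K_exists: "strong_edge_geodetic (K_bip n m) (verts (K_bip n m))"
proof -
  have "strong_edge_geodetic (bip (Inl ` {..<n}) (Inr ` {..<m})) (Inl ` {..<n} \<union> Inr ` {..<m})"
    by (rule exists_sge) auto
  then show ?thesis by (simp add: K_bip_eq)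
qed

lemma arith_odd:
  fixes t k :: nat
  assumes "t \<ge> 1" "k * ((2*t+1 + 1) div 2) \<le> (2*t+1) * (2*t+1 - 1) div 2"
  shows "k \<le> 2*t - 1"
proof -
  have "(2*t+1 + 1) div 2 = t + 1" by simp
  moreover have "(2*t+1) * (2*t+1 - 1) div 2 = (2*t+1) * t" by simp
  ultimately have h: "k * (t+1) \<le> (2*t+1) * t" using assms by simp
  show ?thesis
  proof (rule ccontr)
    assume "\<not> ?thesis"
    then have "2 * t \<le> k" by simp
    then have "2*t*(t+1) \<le> k * (t+1)" by (rule mult_le_mono1)
    then show False using h assms(1) by (simp add: algebra_simps)
  qed
qed

lemma arith_even:
  fixes t k :: nat
  assumes "t \<ge> 1" "k * ((2*t + 1) div 2) \<le> (2*t) * (2*t - 1) div 2"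
  shows "k \<le> 2*t - 1"
proof -
  have "(2*t + 1) div 2 = t" by simp
  moreover have "(2*t) * (2*t - 1) div 2 = t * (2*t - 1)" by simp
  ultimately have "k * t \<le> (2*t - 1) * t" using assms by (simp add: mult.commute)
  then show ?thesis using assms(1) by simp
qed

theorem mainTheorem6:
  fixes n :: nat
  assumes "n \<ge> 3" and "odd n"
  shows "sg_e (K_bip n n) \<ge> n + 2 \<and> sg_e (K_bip n (n - 1)) \<ge> n + 1"
proof
  obtain t where t: "n = 2*t+1" using assms(2) oddE by blast
  have t1: "t \<ge> 1" using t assms(1) by simp
  show "sg_e (K_bip n n) \<ge> n + 2"
  proof (rule sg_e_ge[OF _ K_exists])
    fix S assume "strong_edge_geodetic (K_bip n n) S"
    from K_lower[OF _ _ this] assms(1) obtain k where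
      "card S + k = n + n" "k * ((n + 1) div 2) \<le> n * (n - 1) div 2" by auto
    then show "n + 2 \<le> card S" using arith_odd[OF t1, of k] t t1 by simp
  qed
  show "sg_e (K_bip n (n - 1)) \<ge> n + 1"
  proof (rule sg_e_ge[OF _ K_exists])
    fix S assume sS: "strong_edge_geodetic (K_bip n (n - 1)) S"
    have n1: "1 \<le> n" "1 \<le> n - 1" using assms(1) by auto
    from K_lower[OF n1 sS] show "n + 1 \<le> card S"
    proof (elim disjE exE conjE)
      fix k assume "card S + k = n + (n - 1)" "k * ((n + 1) div 2) \<le> n * (n - 1) div 2"
      then show ?thesis using arith_odd[OF t1, of k] t t1 by simp
    next
      fix k assume "card S + k = n + (n - 1)" "k * ((n - 1 + 1) div 2) \<le> (n - 1) * (n - 1 - 1) div 2"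
      then show ?thesis using arith_even[OF t1, of k] t t1 by simp
    qed
  qed
qed

end
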